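(* Let $g$ be a nondegenerate symmetric bilinear form on $\mathbb{R}^n$, $P\subset\mathbb{R}^n$ a subspace, $R:[0,1]\to\mathcal L(\mathbb{R}^n)$ continuous, and $Y:[0,1]\to\mathbb{R}^n$ a solution of $Y''=RY$ with $g(Y,Y)<0$ on $[0,1]$. Then the map $[0,1]\ni t\mapsto F_t\in\mathcal L(\mathcal H,\widetilde{\mathcal H})$ is of class $C^1$.
   Context: $\mathcal H=\{\hat V\in H^1([0,1],\mathbb{R}^n):\hat V(0)\in P,\hat V(1)=0\}$ with the $H^1$ norm; $\widetilde{\mathcal H}=L^2([0,1],\mathbb{R})/\mathfrak C$ with $\mathfrak C$ the constant functions; $\mathcal L(\mathcal H,\widetilde{\mathcal H})$ carries the operator norm. $F_t(\hat V)(u)=g(\hat V'(u),Y(tu))-t\,g(\hat V(u),Y'(tu))+\mathfrak C$. *)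

theory Defs
  imports "HOL-Analysis.Analysis"
begin

(* Elements of H^1([0,1],R^n) are represented by a pair (V, W): V is the function,
   W is a weak derivative of V, i.e. W is square integrable on [0,1] and
   V u = V 0 + int_0^u W for all u in [0,1] (V absolutely continuous with V' = W a.e.). *)
definition weak_deriv :: "(real \<Rightarrow> 'a::euclidean_space) \<Rightarrow> (real \<Rightarrow> 'a) \<Rightarrow> bool" where
  "weak_deriv V W \<longleftrightarrow>
     W measurable_on {0..1} \<and> (\<lambda>u. (norm (W u))\<^sup>2) integrable_on {0..1} \<and>
     (\<forall>u\<in>{0..1}. V u = V 0 + integral {0..u} W)"

definition inH :: "'a::euclidean_space set \<Rightarrow> (real \<Rightarrow> 'a) \<Rightarrow> (real \<Rightarrow> 'a) \<Rightarrow> bool" where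
  "inH P V W \<longleftrightarrow> weak_deriv V W \<and> V 0 \<in> P \<and> V 1 = 0"

definition h1norm :: "(real \<Rightarrow> 'a::euclidean_space) \<Rightarrow> (real \<Rightarrow> 'a) \<Rightarrow> real" where
  "h1norm V W = sqrt (integral {0..1} (\<lambda>u. (norm (V u))\<^sup>2) + integral {0..1} (\<lambda>u. (norm (W u))\<^sup>2))"

definition sq_int :: "(real \<Rightarrow> real) \<Rightarrow> bool" where
  "sq_int f \<longleftrightarrow> f measurable_on {0..1} \<and> (\<lambda>u. (f u)\<^sup>2) integrable_on {0..1}"

definition qnorm :: "(real \<Rightarrow> real) \<Rightarrow> real" where
  "qnorm f = (INF c::real. sqrt (integral {0..1} (\<lambda>u. (f u - c)\<^sup>2)))"

(* A map A from H (given on representatives (V,W)) to functions [0,1] -> R, read modulo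
   constants, is an element of L(H, L^2/C): values in L^2, linear modulo constants, bounded. *)
definition is_op :: "'a::euclidean_space set \<Rightarrow> ((real \<Rightarrow> 'a) \<Rightarrow> (real \<Rightarrow> 'a) \<Rightarrow> real \<Rightarrow> real) \<Rightarrow> bool" where
  "is_op P A \<longleftrightarrow>
     (\<forall>V W. inH P V W \<longrightarrow> sq_int (A V W)) \<and>
     (\<forall>V1 W1 V2 W2. inH P V1 W1 \<longrightarrow> inH P V2 W2 \<longrightarrow>
        qnorm (\<lambda>u. A (\<lambda>x. V1 x + V2 x) (\<lambda>x. W1 x + W2 x) u - A V1 W1 u - A V2 W2 u) = 0) \<and>
     (\<forall>V W c. inH P V W \<longrightarrow>
        qnorm (\<lambda>u. A (\<lambda>x. c *\<^sub>R V x) (\<lambda>x. c *\<^sub>R W x) u - c * A V W u) = 0) \<and>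
     (\<exists>C. \<forall>V W. inH P V W \<longrightarrow> qnorm (A V W) \<le> C * h1norm V W)"

definition op_norm :: "'a::euclidean_space set \<Rightarrow> ((real \<Rightarrow> 'a) \<Rightarrow> (real \<Rightarrow> 'a) \<Rightarrow> real \<Rightarrow> real) \<Rightarrow> real" where
  "op_norm P A = Inf {C. 0 \<le> C \<and> (\<forall>V W. inH P V W \<longrightarrow> qnorm (A V W) \<le> C * h1norm V W)}"

definition Fop :: "('a::euclidean_space \<Rightarrow> 'a \<Rightarrow> real) \<Rightarrow> (real \<Rightarrow> 'a) \<Rightarrow> (real \<Rightarrow> 'a) \<Rightarrow> real
                   \<Rightarrow> (real \<Rightarrow> 'a) \<Rightarrow> (real \<Rightarrow> 'a) \<Rightarrow> real \<Rightarrow> real" where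
  "Fop g Y Y' t V W u = g (W u) (Y (t * u)) - t * g (V u) (Y' (t * u))"

definition C1_op :: "'a::euclidean_space set \<Rightarrow> (real \<Rightarrow> (real \<Rightarrow> 'a) \<Rightarrow> (real \<Rightarrow> 'a) \<Rightarrow> real \<Rightarrow> real) \<Rightarrow> bool" where
  "C1_op P A \<longleftrightarrow>
     (\<forall>t\<in>{0..1}. is_op P (A t)) \<and>
     (\<exists>D. (\<forall>t\<in>{0..1}. is_op P (D t)) \<and>
          (\<forall>t\<in>{0..1}. ((\<lambda>h. op_norm P (\<lambda>V W u. (A (t + h) V W u - A t V W u) / h - D t V W u))
                          \<longlongrightarrow> 0) (at 0 within {h. t + h \<in> {0..1}})) \<and>
          (\<forall>t\<in>{0..1}. ((\<lambda>s. op_norm P (\<lambda>V W u. D s V W u - D t V W u))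
                          \<longlongrightarrow> 0) (at t within {0..1})))"

end

theory Submission
  imports Defs
begin

lemma integral_sq_nonneg: "0 \<le> integral S (\<lambda>u. (h u::real)\<^sup>2)"
  by (cases "(\<lambda>u. (h u::real)\<^sup>2) integrable_on S") (auto intro: integral_nonneg simp: not_integrable_integral)

lemma qnorm_nonneg: "0 \<le> qnorm f"
  unfolding qnorm_def by (rule cINF_greatest) (auto intro: integral_sq_nonneg)

lemma qnorm_le: "qnorm f \<le> sqrt (integral {0..1} (\<lambda>u. (f u)\<^sup>2))"
proof -
  have "qnorm f \<le> sqrt (integral {0..1} (\<lambda>u. (f u - 0)\<^sup>2))"
    unfolding qnorm_def by (rule cINF_lower) (auto intro!: bdd_belowI[where m=0] integral_sq_nonneg)
  then show ?thesis by simp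
qed

lemma qnorm_zero: "qnorm (\<lambda>u. 0) = 0"
  using qnorm_le[of "\<lambda>u. 0"] qnorm_nonneg[of "\<lambda>u. 0"] by simp

lemma weak_deriv_props:
  assumes "weak_deriv V W"
  shows "W integrable_on {0..1}" "continuous_on {0..1} V"
    "(\<lambda>u. (norm (V u))\<^sup>2) integrable_on {0..1}"
proof -
  have Wm: "W measurable_on {0..1}" and W2: "(\<lambda>u. (norm (W u))\<^sup>2) integrable_on {0..1}"
    and Vi: "\<forall>u\<in>{0..1}. V u = V 0 + integral {0..u} W"
    using assms unfolding weak_deriv_def by blast+
  have I1: "(\<lambda>u. 1 + (norm (W u))\<^sup>2) integrable_on {0..1}"
    using integrable_add[OF integrable_const_ivl W2] by simp
  have "norm (W u) \<le> 1 + (norm (W u))\<^sup>2" for u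
  proof -
    have "(norm (W u) - 1/2)\<^sup>2 = (norm (W u))\<^sup>2 - norm (W u) + 1/4"
      by (simp add: power2_eq_square algebra_simps)
    moreover have "0 \<le> (norm (W u) - 1/2)\<^sup>2" by simp
    ultimately show ?thesis by linarith
  qed
  moreover have "W \<in> borel_measurable (lebesgue_on {0..1})"
    using Wm by (simp add: measurable_on_iff_borel_measurable)
  ultimately show WI: "W integrable_on {0..1}"
    by (intro measurable_bounded_by_integrable_imp_integrable[OF _ I1]) auto
  have "continuous_on {0..1} (\<lambda>u. integral {0..u} W)"
    by (rule indefinite_integral_continuous_1[OF WI])
  then have "continuous_on {0..1} (\<lambda>u. V 0 + integral {0..u} W)"
    by (intro continuous_on_add continuous_on_const)
  then show VC: "continuous_on {0..1} V"
    by (rule continuous_on_eq) (metis Vi)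
  have "continuous_on {0..1} (\<lambda>u. (norm (V u))\<^sup>2)"
    by (intro continuous_on_power continuous_on_norm VC)
  then show "(\<lambda>u. (norm (V u))\<^sup>2) integrable_on {0..1}"
    by (rule integrable_continuous_interval)
qed

lemma sq_ineq:
  fixes a b p q :: real
  assumes "0 \<le> a" "0 \<le> b" "0 \<le> p" "0 \<le> q"
  shows "(a*p + b*q)\<^sup>2 \<le> (a+b)\<^sup>2 * (p\<^sup>2 + q\<^sup>2)"
proof -
  have e: "(a+b)\<^sup>2 * (p\<^sup>2 + q\<^sup>2) - (a*p + b*q)\<^sup>2 = a\<^sup>2*q\<^sup>2 + b\<^sup>2*p\<^sup>2 + a*b*(p-q)\<^sup>2 + a*b*(p\<^sup>2+q\<^sup>2)"
    by (simp add: power2_eq_square algebra_simps)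
  have "0 \<le> a\<^sup>2*q\<^sup>2 + b\<^sup>2*p\<^sup>2 + a*b*(p-q)\<^sup>2 + a*b*(p\<^sup>2+q\<^sup>2)"
    using assms by (intro add_nonneg_nonneg mult_nonneg_nonneg) auto
  then show ?thesis using e by linarith
qed

lemma qnorm_bound:
  assumes wd: "weak_deriv V W" and a: "0 \<le> a" and b: "0 \<le> b"
    and fb: "\<And>u. u \<in> {0..1} \<Longrightarrow> \<bar>f u\<bar> \<le> a * norm (W u) + b * norm (V u)"
  shows "qnorm f \<le> (a+b) * h1norm V W"
proof -
  have W2: "(\<lambda>u. (norm (W u))\<^sup>2) integrable_on {0..1}" using wd unfolding weak_deriv_def by blast+
  have V2: "(\<lambda>u. (norm (V u))\<^sup>2) integrable_on {0..1}" using weak_deriv_props[OF wd] by auto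
  define IV where "IV = integral {0..1} (\<lambda>u. (norm (V u))\<^sup>2)"
  define IW where "IW = integral {0..1} (\<lambda>u. (norm (W u))\<^sup>2)"
  have IV0: "0 \<le> IV" unfolding IV_def by (rule integral_nonneg[OF V2]) auto
  have IW0: "0 \<le> IW" unfolding IW_def by (rule integral_nonneg[OF W2]) auto
  have pt: "(f u)\<^sup>2 \<le> (a+b)\<^sup>2 * ((norm (V u))\<^sup>2 + (norm (W u))\<^sup>2)" if "u \<in> {0..1}" for u
  proof -
    have "(f u)\<^sup>2 = \<bar>f u\<bar>\<^sup>2" by simp
    also have "\<dots> \<le> (a * norm (W u) + b * norm (V u))\<^sup>2"
      using fb[OF that] by (intro power_mono) auto
    also have "\<dots> \<le> (a+b)\<^sup>2 * ((norm (W u))\<^sup>2 + (norm (V u))\<^sup>2)"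
      using a b by (intro sq_ineq) auto
    finally show ?thesis by (simp add: add.commute)
  qed
  have int: "integral {0..1} (\<lambda>u. (f u)\<^sup>2) \<le> (a+b)\<^sup>2 * (IV + IW)"
  proof (cases "(\<lambda>u. (f u)\<^sup>2) integrable_on {0..1}")
    case True
    have "integral {0..1} (\<lambda>u. (f u)\<^sup>2) \<le> integral {0..1} (\<lambda>u. (a+b)\<^sup>2 * ((norm (V u))\<^sup>2 + (norm (W u))\<^sup>2))"
      by (rule integral_le[OF True]) (use integrable_cmul[OF integrable_add[OF V2 W2], of "(a+b)\<^sup>2"] pt in auto)
    also have "\<dots> = (a+b)\<^sup>2 * (IV + IW)"
      unfolding IV_def IW_def using V2 W2 by (simp add: integral_add)
    finally show ?thesis .
  next
    case False
    then show ?thesis using IV0 IW0 by (simp add: not_integrable_integral)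
  qed
  have "qnorm f \<le> sqrt (integral {0..1} (\<lambda>u. (f u)\<^sup>2))" by (rule qnorm_le)
  also have "\<dots> \<le> sqrt ((a+b)\<^sup>2 * (IV + IW))" using int by simp
  also have "\<dots> = (a+b) * h1norm V W"
    unfolding h1norm_def IV_def IW_def using a b by (simp add: real_sqrt_mult)
  finally show ?thesis .
qed

lemma op_norm_bound:
  assumes a: "0 \<le> a" and b: "0 \<le> b"
    and fb: "\<And>V W u. inH P V W \<Longrightarrow> u \<in> {0..1} \<Longrightarrow> \<bar>A V W u\<bar> \<le> a * norm (W u) + b * norm (V u)"
  shows "0 \<le> op_norm P A" "op_norm P A \<le> a + b"
proof -
  have mem: "a + b \<in> {C. 0 \<le> C \<and> (\<forall>V W. inH P V W \<longrightarrow> qnorm (A V W) \<le> C * h1norm V W)}"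
    using a b fb by (auto intro!: qnorm_bound simp: inH_def)
  show "0 \<le> op_norm P A" unfolding op_norm_def
    by (rule cInf_greatest) (use mem in auto)
  show "op_norm P A \<le> a + b" unfolding op_norm_def
    by (rule cInf_lower[OF mem]) (auto intro!: bdd_belowI[where m=0])
qed


lemma sq_bound:
  assumes "0 \<le> a" "0 \<le> b" "\<bar>f\<bar> \<le> a * norm w + b * norm v"
  shows "f\<^sup>2 \<le> (a+b)\<^sup>2 * ((norm v)\<^sup>2 + (norm w)\<^sup>2)"
proof -
  have "f\<^sup>2 = \<bar>f\<bar>\<^sup>2" by simp
  also have "\<dots> \<le> (a * norm w + b * norm v)\<^sup>2"
    using assms by (intro power_mono) auto
  also have "\<dots> \<le> (a+b)\<^sup>2 * ((norm w)\<^sup>2 + (norm v)\<^sup>2)"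
    using assms by (intro sq_ineq) auto
  finally show ?thesis by (simp add: add.commute)
qed

lemma cont_meas:
  fixes f :: "real \<Rightarrow> 'b::euclidean_space"
  shows "continuous_on {0..1} f \<Longrightarrow> f measurable_on {0..1}"
  by (simp add: measurable_on_iff_borel_measurable continuous_imp_measurable_on_sets_lebesgue)

lemma cont_bound:
  fixes f :: "real \<Rightarrow> 'b::real_normed_vector"
  assumes "continuous_on {0..1} f"
  obtains B where "0 < B" "\<And>u. u \<in> {0..1} \<Longrightarrow> norm (f u) \<le> B"
proof -
  have "bounded (f ` {0..1})"
    by (intro compact_imp_bounded compact_continuous_image assms compact_Icc)
  then show ?thesis using that unfolding bounded_pos by auto
qed

lemma is_op_form:
  fixes g :: "'a::euclidean_space \<Rightarrow> 'a \<Rightarrow> real"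
  assumes gb: "bilinear g" and ca: "continuous_on {0..1} \<alpha>" and cb: "continuous_on {0..1} \<beta>"
  shows "is_op P (\<lambda>V W u. g (W u) (\<alpha> u) + g (V u) (\<beta> u))"
proof -
  have bb: "bounded_bilinear g" using gb bilinear_conv_bounded_bilinear by blast
  interpret g: bounded_bilinear g by (rule bb)
  obtain K where Kp: "0 < K" and K: "\<And>x y. norm (g x y) \<le> norm x * norm y * K"
    using g.pos_bounded by blast
  obtain Ba where Bap: "0 < Ba" and Ba: "\<And>u. u \<in> {0..1} \<Longrightarrow> norm (\<alpha> u) \<le> Ba"
    using cont_bound[OF ca] by blast
  obtain Bb where Bbp: "0 < Bb" and Bb: "\<And>u. u \<in> {0..1} \<Longrightarrow> norm (\<beta> u) \<le> Bb"
    using cont_bound[OF cb] by blast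
  have bound: "\<bar>g (W u) (\<alpha> u) + g (V u) (\<beta> u)\<bar> \<le> (K*Ba) * norm (W u) + (K*Bb) * norm (V u)"
    if u: "u \<in> {0..1}" for V W u
  proof -
    have "\<bar>g (W u) (\<alpha> u)\<bar> \<le> norm (W u) * norm (\<alpha> u) * K" using K[of "W u" "\<alpha> u"] by simp
    also have "\<dots> \<le> norm (W u) * Ba * K"
      using Ba[OF u] Kp by (intro mult_right_mono mult_left_mono) auto
    finally have 1: "\<bar>g (W u) (\<alpha> u)\<bar> \<le> (K*Ba) * norm (W u)" by (simp add: ac_simps)
    have "\<bar>g (V u) (\<beta> u)\<bar> \<le> norm (V u) * norm (\<beta> u) * K" using K[of "V u" "\<beta> u"] by simp
    also have "\<dots> \<le> norm (V u) * Bb * K"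
      using Bb[OF u] Kp by (intro mult_right_mono mult_left_mono) auto
    finally have 2: "\<bar>g (V u) (\<beta> u)\<bar> \<le> (K*Bb) * norm (V u)" by (simp add: ac_simps)
    show ?thesis using 1 2 by linarith
  qed
  have sq: "sq_int (\<lambda>u. g (W u) (\<alpha> u) + g (V u) (\<beta> u))" if "inH P V W" for V W
  proof -
    have wd: "weak_deriv V W" using that by (simp add: inH_def)
    have Wm: "W measurable_on {0..1}" and W2: "(\<lambda>u. (norm (W u))\<^sup>2) integrable_on {0..1}"
      using wd unfolding weak_deriv_def by blast+
    have V2: "(\<lambda>u. (norm (V u))\<^sup>2) integrable_on {0..1}" and VC: "continuous_on {0..1} V"
      using weak_deriv_props[OF wd] by auto
    define f where "f = (\<lambda>u. g (W u) (\<alpha> u) + g (V u) (\<beta> u))"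
    have fm: "f measurable_on {0..1}" unfolding f_def
      by (intro measurable_on_add measurable_on_bilinear[OF gb] Wm cont_meas ca cb VC)
    have f2m: "(\<lambda>u. (f u)\<^sup>2) measurable_on {0..1}"
      using measurable_on_scaleR[OF fm fm] by (simp add: power2_eq_square)
    have "(\<lambda>u. (f u)\<^sup>2) integrable_on {0..1}"
    proof (rule measurable_bounded_by_integrable_imp_integrable)
      show "(\<lambda>u. (f u)\<^sup>2) \<in> borel_measurable (lebesgue_on {0..1})"
        using f2m by (simp add: measurable_on_iff_borel_measurable)
      show "(\<lambda>u. (K*Ba+K*Bb)\<^sup>2 * ((norm (V u))\<^sup>2 + (norm (W u))\<^sup>2)) integrable_on {0..1}"
        using integrable_cmul[OF integrable_add[OF V2 W2], of "(K*Ba+K*Bb)\<^sup>2"] by simp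
      show "norm ((f u)\<^sup>2) \<le> (K*Ba+K*Bb)\<^sup>2 * ((norm (V u))\<^sup>2 + (norm (W u))\<^sup>2)" if "u \<in> {0..1}" for u
        using sq_bound[OF _ _ bound[OF that, of W V]] Kp Bap Bbp unfolding f_def by simp
    qed auto
    then show ?thesis using fm unfolding sq_int_def f_def by simp
  qed
  have lin1: "qnorm (\<lambda>u. (g (W1 u + W2 u) (\<alpha> u) + g (V1 u + V2 u) (\<beta> u)) -
      (g (W1 u) (\<alpha> u) + g (V1 u) (\<beta> u)) - (g (W2 u) (\<alpha> u) + g (V2 u) (\<beta> u))) = 0"
    for V1 W1 V2 W2 :: "real \<Rightarrow> 'a"
    by (simp add: g.add_left qnorm_zero)
  have lin2: "qnorm (\<lambda>u. (g (c *\<^sub>R W u) (\<alpha> u) + g (c *\<^sub>R V u) (\<beta> u)) -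
      c * (g (W u) (\<alpha> u) + g (V u) (\<beta> u))) = 0"
    for V W :: "real \<Rightarrow> 'a" and c
    by (simp add: g.scaleR_left algebra_simps qnorm_zero)
  have bnd: "qnorm (\<lambda>u. g (W u) (\<alpha> u) + g (V u) (\<beta> u)) \<le> (K*Ba+K*Bb) * h1norm V W"
    if "inH P V W" for V W
    using that Kp Bap Bbp by (intro qnorm_bound bound) (auto simp: inH_def)
  show ?thesis unfolding is_op_def using sq lin1 lin2 bnd by blast
qed

lemma unif_deriv:
  fixes f f' :: "real \<Rightarrow> 'b::real_normed_vector"
  assumes d: "\<And>s. s \<in> {0..1} \<Longrightarrow> (f has_vector_derivative f' s) (at s within {0..1})"
    and c: "continuous_on {0..1} f'" and e: "0 < e"
  shows "\<exists>\<delta>>0. \<forall>a\<in>{0..1}. \<forall>b\<in>{0..1}. \<bar>b - a\<bar> < \<delta> \<longrightarrow>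
           norm (f b - f a - (b - a) *\<^sub>R f' a) \<le> e * \<bar>b - a\<bar>"
proof -
  have "uniformly_continuous_on {0..1} f'"
    by (rule compact_uniformly_continuous[OF c compact_Icc])
  then obtain \<delta> where dp: "\<delta> > 0"
    and dd: "\<And>x y. x \<in> {0..1} \<Longrightarrow> y \<in> {0..1} \<Longrightarrow> dist y x < \<delta> \<Longrightarrow> dist (f' y) (f' x) < e"
    unfolding uniformly_continuous_on_def using e by metis
  have "norm (f b - f a - (b - a) *\<^sub>R f' a) \<le> e * \<bar>b - a\<bar>"
    if a: "a \<in> {0..1}" and b: "b \<in> {0..1}" and ab: "\<bar>b - a\<bar> < \<delta>" for a b
  proof -
    define S where "S = {min a b..max a b}"
    have Ssub: "S \<subseteq> {0..1}" using a b by (auto simp: S_def)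
    have "norm (f b - f a - (\<lambda>h. h *\<^sub>R f' a) (b - a)) \<le> norm (b - a) * e"
    proof (rule differentiable_bound_linearization[of a b S f "\<lambda>x h. h *\<^sub>R f' x" a e])
      show "a + t *\<^sub>R (b - a) \<in> S" if t: "t \<in> {0..1}" for t
      proof (cases "a \<le> b")
        case True
        have "t * (b - a) \<le> 1 * (b - a)" using t True by (intro mult_right_mono) auto
        then show ?thesis using True t by (auto simp: S_def)
      next
        case False
        have "t * (a - b) \<le> 1 * (a - b)" using t False by (intro mult_right_mono) auto
        moreover have "0 \<le> t * (a - b)" using t False by (intro mult_nonneg_nonneg) auto
        ultimately show ?thesis using False t by (auto simp: S_def algebra_simps)
      qed
      show "((f has_derivative (\<lambda>h. h *\<^sub>R f' x)) (at x within S))" if "x \<in> S" for x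
        using d[of x] that Ssub has_derivative_subset[OF _ Ssub]
        unfolding has_vector_derivative_def by blast
      show "a \<in> S" by (auto simp: S_def)
      show "onorm ((\<lambda>h. h *\<^sub>R f' x) - (\<lambda>h. h *\<^sub>R f' a)) \<le> e" if x: "x \<in> S" for x
      proof -
        have eq: "(\<lambda>h. h *\<^sub>R f' x) - (\<lambda>h. h *\<^sub>R f' a) = (\<lambda>h. h *\<^sub>R (f' x - f' a))"
          by (auto simp: fun_diff_def scaleR_diff_right)
        have "onorm (\<lambda>h::real. h *\<^sub>R (f' x - f' a)) = onorm (\<lambda>h::real. h) * norm (f' x - f' a)"
          by (rule onorm_scaleR_left) (rule bounded_linear_ident)
        also have "\<dots> = norm (f' x - f' a)" by (simp add: onorm_id)
        also have "\<dots> < e"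
        proof -
          have "x \<in> {0..1}" using x Ssub by auto
          moreover have "dist x a < \<delta>" using x ab by (auto simp: S_def dist_real_def)
          ultimately show ?thesis using dd[OF a] by (simp add: dist_norm)
        qed
        finally show ?thesis unfolding eq by simp
      qed
    qed
    then show ?thesis by (simp add: mult.commute)
  qed
  then show ?thesis using dp by blast
qed

lemma mult01: "t \<in> {0..1} \<Longrightarrow> u \<in> {0..1} \<Longrightarrow> t * u \<in> {0..(1::real)}"
  by (auto intro: mult_le_one)

lemma unif_deriv2:
  fixes f f' :: "real \<Rightarrow> 'b::real_normed_vector"
  assumes d: "\<And>s. s \<in> {0..1} \<Longrightarrow> (f has_vector_derivative f' s) (at s within {0..1})"
    and c: "continuous_on {0..1} f'" and e: "0 < e"
  shows "\<exists>\<delta>>0. \<forall>t\<in>{0..1}. \<forall>h. t + h \<in> {0..1} \<longrightarrow> h \<noteq> 0 \<longrightarrow> \<bar>h\<bar> < \<delta> \<longrightarrow>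
           (\<forall>u\<in>{0..1}. norm ((1/h) *\<^sub>R (f ((t+h)*u) - f (t*u)) - u *\<^sub>R f' (t*u)) \<le> e)"
proof -
  obtain \<delta> where dp: "\<delta> > 0" and dd: "\<And>a b. a\<in>{0..1} \<Longrightarrow> b\<in>{0..1} \<Longrightarrow> \<bar>b - a\<bar> < \<delta> \<Longrightarrow>
           norm (f b - f a - (b - a) *\<^sub>R f' a) \<le> e * \<bar>b - a\<bar>"
    using unif_deriv[OF d c e] by blast
  have "norm ((1/h) *\<^sub>R (f ((t+h)*u) - f (t*u)) - u *\<^sub>R f' (t*u)) \<le> e"
    if t: "t \<in> {0..1}" and th: "t + h \<in> {0..1}" and h0: "h \<noteq> 0" and hd: "\<bar>h\<bar> < \<delta>" and u: "u \<in> {0..1}"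
    for t h u
  proof -
    have hu: "(t+h)*u - t*u = h*u" by (simp add: algebra_simps)
    have abs: "\<bar>(t+h)*u - t*u\<bar> = \<bar>h\<bar> * u" unfolding hu using u by (simp add: abs_mult)
    have "\<bar>h\<bar> * u \<le> \<bar>h\<bar> * 1" using u by (intro mult_left_mono) auto
    then have "\<bar>(t+h)*u - t*u\<bar> < \<delta>" using abs hd by linarith
    then have n: "norm (f ((t+h)*u) - f (t*u) - (h*u) *\<^sub>R f' (t*u)) \<le> e * (\<bar>h\<bar> * u)"
      using dd[OF mult01[OF t u] mult01[OF th u]] abs by (simp add: algebra_simps)
    have eq: "(1/h) *\<^sub>R (f ((t+h)*u) - f (t*u)) - u *\<^sub>R f' (t*u)
        = (1/h) *\<^sub>R (f ((t+h)*u) - f (t*u) - (h*u) *\<^sub>R f' (t*u))"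
      using h0 by (simp add: scaleR_diff_right)
    have "norm ((1/h) *\<^sub>R (f ((t+h)*u) - f (t*u)) - u *\<^sub>R f' (t*u))
        = norm (f ((t+h)*u) - f (t*u) - (h*u) *\<^sub>R f' (t*u)) / \<bar>h\<bar>"
      unfolding eq by (simp add: divide_inverse mult.commute)
    also have "\<dots> \<le> e * (\<bar>h\<bar> * u) / \<bar>h\<bar>"
      using n h0 by (intro divide_right_mono) auto
    also have "\<dots> = e * u" using h0 by simp
    also have "\<dots> \<le> e" using u e by (simp add: mult_left_le)
    finally show ?thesis .
  qed
  then show ?thesis using dp by blast
qed

lemma unif_cont2:
  fixes f :: "real \<Rightarrow> 'b::real_normed_vector"
  assumes c: "continuous_on {0..1} f" and e: "0 < e"
  shows "\<exists>\<delta>>0. \<forall>s\<in>{0..1}. \<forall>t\<in>{0..1}. \<bar>s - t\<bar> < \<delta> \<longrightarrow>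
           (\<forall>u\<in>{0..1}. norm (f (s*u) - f (t*u)) \<le> e)"
proof -
  have "uniformly_continuous_on {0..1} f"
    by (rule compact_uniformly_continuous[OF c compact_Icc])
  then obtain \<delta> where dp: "\<delta> > 0"
    and dd: "\<And>x y. x \<in> {0..1} \<Longrightarrow> y \<in> {0..1} \<Longrightarrow> dist y x < \<delta> \<Longrightarrow> dist (f y) (f x) < e"
    unfolding uniformly_continuous_on_def using e by metis
  have "norm (f (s*u) - f (t*u)) \<le> e"
    if s: "s \<in> {0..1}" and t: "t \<in> {0..1}" and st: "\<bar>s - t\<bar> < \<delta>" and u: "u \<in> {0..1}" for s t u
  proof -
    have su: "s*u - t*u = (s - t)*u" by (simp add: left_diff_distrib)
    have abs: "\<bar>s*u - t*u\<bar> = \<bar>s - t\<bar> * u" unfolding su using u by (simp add: abs_mult)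
    have "\<bar>s - t\<bar> * u \<le> \<bar>s - t\<bar> * 1" using u by (intro mult_left_mono) auto
    then have "dist (s*u) (t*u) < \<delta>" using abs st by (simp add: dist_real_def)
    then show ?thesis using dd[OF mult01[OF t u] mult01[OF s u]] by (simp add: dist_norm)
  qed
  then show ?thesis using dp by blast
qed

theorem lemma4p3:
  fixes g :: "'a::euclidean_space \<Rightarrow> 'a \<Rightarrow> real"
    and P :: "'a set"
    and R :: "real \<Rightarrow> 'a \<Rightarrow>\<^sub>L 'a"
    and Y Y' :: "real \<Rightarrow> 'a"
  assumes g_bilinear: "bilinear g"
    and g_sym: "\<And>x y. g x y = g y x"
    and g_nondeg: "\<And>x. (\<forall>y. g x y = 0) \<Longrightarrow> x = 0"
    and P_subspace: "subspace P"
    and R_cont: "continuous_on {0..1} R"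
    and Y_deriv: "\<And>t. t \<in> {0..1} \<Longrightarrow> (Y has_vector_derivative Y' t) (at t within {0..1})"
    and Y'_deriv: "\<And>t. t \<in> {0..1} \<Longrightarrow> (Y' has_vector_derivative blinfun_apply (R t) (Y t)) (at t within {0..1})"
    and Y_timelike: "\<And>t. t \<in> {0..1} \<Longrightarrow> g (Y t) (Y t) < 0"
  shows "C1_op P (Fop g Y Y')"
proof -
  have bb: "bounded_bilinear g" using g_bilinear bilinear_conv_bounded_bilinear by blast
  interpret g: bounded_bilinear g by (rule bb)
  obtain K where Kp: "0 < K" and K: "\<And>x y. norm (g x y) \<le> norm x * norm y * K"
    using g.pos_bounded by blast
  have gb2: "\<bar>g w x + g v y\<bar> \<le> (K*a) * norm w + (K*b) * norm v"
    if xa: "norm x \<le> a" and yb: "norm y \<le> b" for w x v y a b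
  proof -
    have "\<bar>g w x\<bar> \<le> norm w * norm x * K" using K[of w x] by simp
    also have "\<dots> \<le> norm w * a * K"
      using xa Kp by (intro mult_right_mono mult_left_mono) auto
    finally have 1: "\<bar>g w x\<bar> \<le> (K*a) * norm w" by (simp add: ac_simps)
    have "\<bar>g v y\<bar> \<le> norm v * norm y * K" using K[of v y] by simp
    also have "\<dots> \<le> norm v * b * K"
      using yb Kp by (intro mult_right_mono mult_left_mono) auto
    finally have 2: "\<bar>g v y\<bar> \<le> (K*b) * norm v" by (simp add: ac_simps)
    show ?thesis using 1 2 by linarith
  qed
  have Yc: "continuous_on {0..1} Y"
    unfolding continuous_on_eq_continuous_within using Y_deriv has_vector_derivative_continuous by blast
  have Y'c: "continuous_on {0..1} Y'"
    unfolding continuous_on_eq_continuous_within using Y'_deriv has_vector_derivative_continuous by blast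
  define Z where "Z = (\<lambda>x. blinfun_apply (R x) (Y x))"
  have Zc: "continuous_on {0..1} Z" unfolding Z_def by (intro continuous_intros R_cont Yc)
  define G where "G = (\<lambda>x. x *\<^sub>R Z x)"
  have Gc: "continuous_on {0..1} G" unfolding G_def by (intro continuous_intros Zc)
  have Y'd: "\<And>t. t \<in> {0..1} \<Longrightarrow> (Y' has_vector_derivative Z t) (at t within {0..1})"
    using Y'_deriv by (simp add: Z_def)
  have comp: "continuous_on {0..1} (\<lambda>u. f (t*u))" if "continuous_on {0..1} f" "t \<in> {0..1}"
    for f :: "real \<Rightarrow> 'a" and t
    by (rule continuous_on_compose2[OF that(1)]) (use that in \<open>auto intro!: continuous_intros mult01\<close>)
  define D where "D = (\<lambda>t V W u. g (W u) (u *\<^sub>R Y' (t*u)) + g (V u) (- Y' (t*u) - G (t*u)))"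
  have Feq: "Fop g Y Y' t = (\<lambda>V W u. g (W u) (Y (t*u)) + g (V u) ((-t) *\<^sub>R Y' (t*u)))" for t
    by (auto simp: Fop_def fun_eq_iff g.scaleR_right g.minus_right)
  have isF: "\<forall>t\<in>{0..1}. is_op P (Fop g Y Y' t)"
    unfolding Feq by (intro ballI is_op_form g_bilinear comp Yc Y'c continuous_intros) auto
  have isD: "\<forall>t\<in>{0..1}. is_op P (D t)"
    unfolding D_def by (intro ballI is_op_form g_bilinear comp Yc Y'c Gc continuous_intros) auto
  have deriv: "((\<lambda>h. op_norm P (\<lambda>V W u. (Fop g Y Y' (t + h) V W u - Fop g Y Y' t V W u) / h - D t V W u))
                          \<longlongrightarrow> 0) (at 0 within {h. t + h \<in> {0..1}})" if t: "t \<in> {0..1}" for t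
  proof (rule tendstoI)
    fix e :: real assume e: "0 < e"
    define e1 where "e1 = e / (6*K)"
    have e1: "0 < e1" using e Kp by (simp add: e1_def)
    obtain d1 where d1: "d1 > 0" and dd1: "\<forall>t\<in>{0..1}. \<forall>h. t + h \<in> {0..1} \<longrightarrow> h \<noteq> 0 \<longrightarrow> \<bar>h\<bar> < d1 \<longrightarrow>
           (\<forall>u\<in>{0..1}. norm ((1/h) *\<^sub>R (Y ((t+h)*u) - Y (t*u)) - u *\<^sub>R Y' (t*u)) \<le> e1)"
      using unif_deriv2[OF Y_deriv Y'c e1] by blast
    obtain d2 where d2: "d2 > 0" and dd2: "\<forall>t\<in>{0..1}. \<forall>h. t + h \<in> {0..1} \<longrightarrow> h \<noteq> 0 \<longrightarrow> \<bar>h\<bar> < d2 \<longrightarrow>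
           (\<forall>u\<in>{0..1}. norm ((1/h) *\<^sub>R (Y' ((t+h)*u) - Y' (t*u)) - u *\<^sub>R Z (t*u)) \<le> e1)"
      using unif_deriv2[OF Y'd Zc e1] by blast
    obtain d3 where d3: "d3 > 0" and dd3: "\<forall>s\<in>{0..1}. \<forall>t\<in>{0..1}. \<bar>s - t\<bar> < d3 \<longrightarrow>
           (\<forall>u\<in>{0..1}. norm (Y' (s*u) - Y' (t*u)) \<le> e1)"
      using unif_cont2[OF Y'c e1] by blast
    show "\<forall>\<^sub>F h in at 0 within {h. t + h \<in> {0..1}}.
      dist (op_norm P (\<lambda>V W u. (Fop g Y Y' (t + h) V W u - Fop g Y Y' t V W u) / h - D t V W u)) 0 < e"
      unfolding eventually_at
    proof (intro exI[of _ "min d1 (min d2 d3)"] conjI ballI impI)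
      show "0 < min d1 (min d2 d3)" using d1 d2 d3 by auto
      fix h assume hS: "h \<in> {h. t + h \<in> {0..1}}" and hd: "h \<noteq> 0 \<and> dist h 0 < min d1 (min d2 d3)"
      have th: "t + h \<in> {0..1}" using hS by simp
      have h0: "h \<noteq> 0" using hd by simp
      have hd1: "\<bar>h\<bar> < d1" "\<bar>h\<bar> < d2" "\<bar>(t+h) - t\<bar> < d3" using hd by auto
      have bnd: "\<bar>(Fop g Y Y' (t + h) V W u - Fop g Y Y' t V W u) / h - D t V W u\<bar>
          \<le> (K*e1) * norm (W u) + (K*(2*e1)) * norm (V u)" if u: "u \<in> {0..1}" for V W u
      proof -
        define a where "a = (1/h) *\<^sub>R (Y ((t+h)*u) - Y (t*u)) - u *\<^sub>R Y' (t*u)"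
        define b where "b = - (Y' ((t+h)*u) - Y' (t*u)) - t *\<^sub>R ((1/h) *\<^sub>R (Y' ((t+h)*u) - Y' (t*u)) - u *\<^sub>R Z (t*u))"
        have eq: "(Fop g Y Y' (t + h) V W u - Fop g Y Y' t V W u) / h - D t V W u = g (W u) a + g (V u) b"
          unfolding a_def b_def Fop_def D_def G_def using h0
          by (simp add: g.diff_right g.add_right g.scaleR_right g.minus_right field_simps)
        have na: "norm a \<le> e1" unfolding a_def using dd1 t th h0 hd1 u by blast
        have n1: "norm (Y' ((t+h)*u) - Y' (t*u)) \<le> e1" using dd3 t th hd1 u by blast
        have n2: "norm ((1/h) *\<^sub>R (Y' ((t+h)*u) - Y' (t*u)) - u *\<^sub>R Z (t*u)) \<le> e1"
          using dd2 t th h0 hd1 u by blast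
        have "norm b \<le> norm (Y' ((t+h)*u) - Y' (t*u)) + \<bar>t\<bar> * norm ((1/h) *\<^sub>R (Y' ((t+h)*u) - Y' (t*u)) - u *\<^sub>R Z (t*u))"
          unfolding b_def by (rule order_trans[OF norm_triangle_ineq4]) (simp add: norm_minus_commute)
        also have "\<dots> \<le> e1 + 1 * e1"
          using n1 n2 t e1 by (intro add_mono mult_mono) auto
        finally have nb: "norm b \<le> 2 * e1" by simp
        show ?thesis unfolding eq by (rule gb2[OF na nb])
      qed
      have on: "0 \<le> op_norm P (\<lambda>V W u. (Fop g Y Y' (t + h) V W u - Fop g Y Y' t V W u) / h - D t V W u)"
           "op_norm P (\<lambda>V W u. (Fop g Y Y' (t + h) V W u - Fop g Y Y' t V W u) / h - D t V W u) \<le> K*e1 + K*(2*e1)"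
        using op_norm_bound[where A="\<lambda>V W u. (Fop g Y Y' (t + h) V W u - Fop g Y Y' t V W u) / h - D t V W u" and P=P and a="K*e1" and b="K*(2*e1)", OF _ _ bnd] Kp e1 by auto
      have "K*e1 + K*(2*e1) = e/2" using Kp by (simp add: e1_def field_simps)
      then show "dist (op_norm P (\<lambda>V W u. (Fop g Y Y' (t + h) V W u - Fop g Y Y' t V W u) / h - D t V W u)) 0 < e"
        using on e by (simp add: dist_real_def)
    qed
  qed
  have cont: "((\<lambda>s. op_norm P (\<lambda>V W u. D s V W u - D t V W u)) \<longlongrightarrow> 0) (at t within {0..1})"
    if t: "t \<in> {0..1}" for t
  proof (rule tendstoI)
    fix e :: real assume e: "0 < e"
    define e1 where "e1 = e / (6*K)"
    have e1: "0 < e1" using e Kp by (simp add: e1_def)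
    obtain d3 where d3: "d3 > 0" and dd3: "\<forall>s\<in>{0..1}. \<forall>t\<in>{0..1}. \<bar>s - t\<bar> < d3 \<longrightarrow>
           (\<forall>u\<in>{0..1}. norm (Y' (s*u) - Y' (t*u)) \<le> e1)"
      using unif_cont2[OF Y'c e1] by blast
    obtain d4 where d4: "d4 > 0" and dd4: "\<forall>s\<in>{0..1}. \<forall>t\<in>{0..1}. \<bar>s - t\<bar> < d4 \<longrightarrow>
           (\<forall>u\<in>{0..1}. norm (G (s*u) - G (t*u)) \<le> e1)"
      using unif_cont2[OF Gc e1] by blast
    show "\<forall>\<^sub>F s in at t within {0..1}. dist (op_norm P (\<lambda>V W u. D s V W u - D t V W u)) 0 < e"
      unfolding eventually_at
    proof (intro exI[of _ "min d3 d4"] conjI ballI impI)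
      show "0 < min d3 d4" using d3 d4 by auto
      fix s assume s: "s \<in> {0..1}" and sd: "s \<noteq> t \<and> dist s t < min d3 d4"
      have sd1: "\<bar>s - t\<bar> < d3" "\<bar>s - t\<bar> < d4" using sd by (auto simp: dist_real_def)
      have bnd: "\<bar>D s V W u - D t V W u\<bar> \<le> (K*e1) * norm (W u) + (K*(2*e1)) * norm (V u)"
        if u: "u \<in> {0..1}" for V W u
      proof -
        define a where "a = u *\<^sub>R (Y' (s*u) - Y' (t*u))"
        define b where "b = - (Y' (s*u) - Y' (t*u)) - (G (s*u) - G (t*u))"
        have eq: "D s V W u - D t V W u = g (W u) a + g (V u) b"
          unfolding a_def b_def D_def
          by (simp add: g.diff_right g.add_right g.scaleR_right g.minus_right algebra_simps)
        have n1: "norm (Y' (s*u) - Y' (t*u)) \<le> e1" using dd3 s t sd1 u by blast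
        have n2: "norm (G (s*u) - G (t*u)) \<le> e1" using dd4 s t sd1 u by blast
        have "norm a = \<bar>u\<bar> * norm (Y' (s*u) - Y' (t*u))" unfolding a_def by simp
        also have "\<dots> \<le> 1 * e1" using u n1 by (intro mult_mono) auto
        finally have na: "norm a \<le> e1" by simp
        have "norm b \<le> norm (Y' (s*u) - Y' (t*u)) + norm (G (s*u) - G (t*u))"
          unfolding b_def by (rule order_trans[OF norm_triangle_ineq4]) (simp add: norm_minus_commute)
        also have "\<dots> \<le> e1 + e1" using n1 n2 by simp
        finally have nb: "norm b \<le> 2 * e1" by simp
        show ?thesis unfolding eq by (rule gb2[OF na nb])
      qed
      have on: "0 \<le> op_norm P (\<lambda>V W u. D s V W u - D t V W u)"
           "op_norm P (\<lambda>V W u. D s V W u - D t V W u) \<le> K*e1 + K*(2*e1)"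
        using op_norm_bound[where A="\<lambda>V W u. D s V W u - D t V W u" and P=P and a="K*e1" and b="K*(2*e1)", OF _ _ bnd] Kp e1 by auto
      have "K*e1 + K*(2*e1) = e/2" using Kp by (simp add: e1_def field_simps)
      then show "dist (op_norm P (\<lambda>V W u. D s V W u - D t V W u)) 0 < e"
        using on e by (simp add: dist_real_def)
    qed
  qed
  show ?thesis unfolding C1_op_def
    using isF isD deriv cont by blast
qed

end
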